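(* Let $\lambda\in(1,2]$ and $\tau_0\in(0,2]$. There exist universal constants $c_1,c_2>0$ such that for every estimator $\widehat u=\widehat u(M,b)\in\mathcal S^{d-1}$ (measurable function of $(M,b)$), $$\mathbb{E}_{M,b}\,\mathbb{E}\big[\langle\widehat u,u\rangle^2\mid M,b\big]\le\sqrt{\big(\mathbb{E}\|u\|_2^2\big)^2-\mathbb{E}_{M,b}\big[\mathrm{MMSE}_{d,\lambda}(uu^\top\mid M,b)\big]}+c_1d^{-c_2}.$$
   Context: $W$ is a $d\times d$ symmetric random matrix with independent entries $W_{ii}\sim\mathcal N(0,2/d)$, $W_{ij}\sim\mathcal N(0,1/d)$ for $i<j$; $u\sim\mathcal N(0,I_d/d)$ independent; $M=\lambda uu^\top+W$; $b=\sqrt{\tau_0}u+z$, $z\sim\mathcal N(0,I_d/d)$ independent. $\mathrm{MMSE}_{d,\lambda}(uu^\top\mid M,b):=\mathbb{E}_u\big[\|uu^\top-\mathbb{E}[uu^\top\mid M,b]\|_F^2\mid M,b\big]$. *)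

theory Defs
  imports "HOL-Probability.Probability"
begin

definition gauss :: "real \<Rightarrow> real measure" where
  "gauss s = density lborel (normal_density 0 s)"

text \<open>Sample point: (u, z, w) with u, z in R^d (coordinates 0..d-1) and
  w the upper-triangular entries (i \<le> j) of the symmetric noise matrix W.\<close>
type_synonym sample = "(nat \<Rightarrow> real) \<times> (nat \<Rightarrow> real) \<times> (nat \<times> nat \<Rightarrow> real)"

definition upper_idx :: "nat \<Rightarrow> (nat \<times> nat) set" where
  "upper_idx d = {p. fst p \<le> snd p \<and> snd p < d}"

definition spk_space :: "nat \<Rightarrow> sample measure" where
  "spk_space d =
     (PiM {..<d} (\<lambda>_. gauss (sqrt (1 / real d)))) \<Otimes>\<^sub>M
     ((PiM {..<d} (\<lambda>_. gauss (sqrt (1 / real d)))) \<Otimes>\<^sub>M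
      (PiM (upper_idx d) (\<lambda>p. gauss (if fst p = snd p then sqrt (2 / real d) else sqrt (1 / real d)))))"

definition uvec :: "sample \<Rightarrow> nat \<Rightarrow> real" where
  "uvec \<omega> = fst \<omega>"

definition zvec :: "sample \<Rightarrow> nat \<Rightarrow> real" where
  "zvec \<omega> = fst (snd \<omega>)"

definition Wmat :: "sample \<Rightarrow> nat \<Rightarrow> nat \<Rightarrow> real" where
  "Wmat \<omega> i j = (if i \<le> j then snd (snd \<omega>) (i, j) else snd (snd \<omega>) (j, i))"

definition Mmat :: "nat \<Rightarrow> real \<Rightarrow> sample \<Rightarrow> nat \<Rightarrow> nat \<Rightarrow> real" where
  "Mmat d lam \<omega> = (\<lambda>i\<in>{..<d}. \<lambda>j\<in>{..<d}. lam * uvec \<omega> i * uvec \<omega> j + Wmat \<omega> i j)"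

definition bvec :: "nat \<Rightarrow> real \<Rightarrow> sample \<Rightarrow> nat \<Rightarrow> real" where
  "bvec d tau0 \<omega> = (\<lambda>i\<in>{..<d}. sqrt tau0 * uvec \<omega> i + zvec \<omega> i)"

definition obs_space :: "nat \<Rightarrow> ((nat \<Rightarrow> nat \<Rightarrow> real) \<times> (nat \<Rightarrow> real)) measure" where
  "obs_space d = (PiM {..<d} (\<lambda>_. PiM {..<d} (\<lambda>_. borel))) \<Otimes>\<^sub>M (PiM {..<d} (\<lambda>_. borel))"

definition obs :: "nat \<Rightarrow> real \<Rightarrow> real \<Rightarrow> sample \<Rightarrow> (nat \<Rightarrow> nat \<Rightarrow> real) \<times> (nat \<Rightarrow> real)" where
  "obs d lam tau0 \<omega> = (Mmat d lam \<omega>, bvec d tau0 \<omega>)"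

definition obs_sigma :: "nat \<Rightarrow> real \<Rightarrow> real \<Rightarrow> sample measure" where
  "obs_sigma d lam tau0 = vimage_algebra (space (spk_space d)) (obs d lam tau0) (obs_space d)"

definition MMSE :: "nat \<Rightarrow> real \<Rightarrow> real \<Rightarrow> sample \<Rightarrow> real" where
  "MMSE d lam tau0 =
     real_cond_exp (spk_space d) (obs_sigma d lam tau0)
       (\<lambda>\<omega>. \<Sum>i<d. \<Sum>j<d. (uvec \<omega> i * uvec \<omega> j
            - real_cond_exp (spk_space d) (obs_sigma d lam tau0) (\<lambda>\<omega>'. uvec \<omega>' i * uvec \<omega>' j) \<omega>)\<^sup>2)"

end

theory Submission
  imports Defs
begin
lemma amgm_aux:
  fixes a q t :: real assumes t: "t > 0"
  shows "a * q \<le> (t * a\<^sup>2 + q\<^sup>2 / t) / 2"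
proof -
  have "0 \<le> (t * a - q)\<^sup>2 / t" using t by simp
  also have "(t * a - q)\<^sup>2 / t = t * a\<^sup>2 - 2 * (a * q) + q\<^sup>2 / t"
    using t by (simp add: power2_eq_square field_simps)
  finally show ?thesis by simp
qed

lemma abstract_bound:
  fixes X :: "'i \<Rightarrow> 'i \<Rightarrow> 'a \<Rightarrow> real" and h :: "'i \<Rightarrow> 'a \<Rightarrow> real"
  assumes sf: "sigma_finite_subalgebra M F" and ps: "prob_space M"
    and fin: "finite I"
    and hF: "\<And>i. i \<in> I \<Longrightarrow> h i \<in> borel_measurable F"
    and hn: "\<And>x. x \<in> space M \<Longrightarrow> (\<Sum>i\<in>I. (h i x)\<^sup>2) = 1"
    and XI: "\<And>i j. i \<in> I \<Longrightarrow> j \<in> I \<Longrightarrow> integrable M (X i j)"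
    and X2I: "\<And>i j. i \<in> I \<Longrightarrow> j \<in> I \<Longrightarrow> integrable M (\<lambda>x. (X i j x)\<^sup>2)"
    and eps: "\<epsilon> > 0"
  shows "integral\<^sup>L M (real_cond_exp M F (\<lambda>x. \<Sum>i\<in>I. \<Sum>j\<in>I. h i x * h j x * X i j x))
     \<le> sqrt ((\<Sum>i\<in>I. \<Sum>j\<in>I. integral\<^sup>L M (\<lambda>x. (X i j x)\<^sup>2))
            - integral\<^sup>L M (real_cond_exp M F (\<lambda>x. \<Sum>i\<in>I. \<Sum>j\<in>I. (X i j x - real_cond_exp M F (X i j) x)\<^sup>2))) + \<epsilon>"
    and "0 \<le> (\<Sum>i\<in>I. \<Sum>j\<in>I. integral\<^sup>L M (\<lambda>x. (X i j x)\<^sup>2))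
            - integral\<^sup>L M (real_cond_exp M F (\<lambda>x. \<Sum>i\<in>I. \<Sum>j\<in>I. (X i j x - real_cond_exp M F (X i j) x)\<^sup>2))"
proof -
  interpret sigma_finite_subalgebra M F by (rule sf)
  interpret prob_space M by (rule ps)
  define Q where "Q i j = real_cond_exp M F (X i j)" for i j
  have XM[measurable]: "X i j \<in> borel_measurable M" if "i \<in> I" "j \<in> I" for i j
    using XI[OF that] by auto
  have QI: "integrable M (Q i j)" if "i \<in> I" "j \<in> I" for i j
    unfolding Q_def using XI[OF that] by (rule real_cond_exp_int(1))
  have QF[measurable]: "Q i j \<in> borel_measurable F" for i j
    unfolding Q_def by simp
  have QM[measurable]: "Q i j \<in> borel_measurable M" for i j
    unfolding Q_def by simp
  have Q2I: "integrable M (\<lambda>x. (Q i j x)\<^sup>2)" if "i \<in> I" "j \<in> I" for i j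
    unfolding Q_def
    by (rule integrable_convex_cond_exp[where I=UNIV and q="\<lambda>x. x\<^sup>2"])
       (auto simp: XI[OF that] X2I[OF that] convex_power2)
  have hM[measurable]: "h i \<in> borel_measurable M" if "i \<in> I" for i
    using measurable_from_subalg[OF subalg hF[OF that]] .
  have hb: "\<bar>h i x\<bar> \<le> 1" if "i \<in> I" "x \<in> space M" for i x
  proof -
    have "(h i x)\<^sup>2 \<le> (\<Sum>i\<in>I. (h i x)\<^sup>2)"
      using fin that by (intro member_le_sum) auto
    then have "(h i x)\<^sup>2 \<le> 1" using hn[OF that(2)] by simp
    then show ?thesis by (simp add: abs_square_le_1)
  qed
  have hhX: "integrable M (\<lambda>x. h i x * h j x * X i j x)" if "i \<in> I" "j \<in> I" for i j
  proof (rule Bochner_Integration.integrable_bound[OF XI[OF that]])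
    show "(\<lambda>x. h i x * h j x * X i j x) \<in> borel_measurable M" using that by measurable
    show "AE x in M. norm (h i x * h j x * X i j x) \<le> norm (X i j x)"
    proof (rule AE_I2)
      fix x assume x: "x \<in> space M"
      have "\<bar>h i x * h j x\<bar> \<le> 1" using hb[OF that(1) x] hb[OF that(2) x]
        by (simp add: abs_mult mult_le_one)
      then show "norm (h i x * h j x * X i j x) \<le> norm (X i j x)"
        by (simp add: abs_mult mult_left_le_one_le)
    qed
  qed
  define g where "g x = (\<Sum>i\<in>I. \<Sum>j\<in>I. h i x * h j x * X i j x)" for x
  have gI: "integrable M g" unfolding g_def using hhX by auto
  have step1: "integral\<^sup>L M (real_cond_exp M F g) = integral\<^sup>L M g"
    by (rule real_cond_exp_int(2)[OF gI])
  have hhF: "(\<lambda>x. h i x * h j x) \<in> borel_measurable F" if "i \<in> I" "j \<in> I" for i j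
    using hF[OF that(1)] hF[OF that(2)] by measurable
  have eqQ: "integral\<^sup>L M (\<lambda>x. h i x * h j x * X i j x) = integral\<^sup>L M (\<lambda>x. h i x * h j x * Q i j x)"
     and hhQ: "integrable M (\<lambda>x. h i x * h j x * Q i j x)" if "i \<in> I" "j \<in> I" for i j
    using real_cond_exp_intg[OF hhX[OF that] hhF[OF that] XM[OF that]] unfolding Q_def by auto
  have step2: "integral\<^sup>L M g = integral\<^sup>L M (\<lambda>x. \<Sum>i\<in>I. \<Sum>j\<in>I. h i x * h j x * Q i j x)"
    unfolding g_def using hhX hhQ eqQ by (simp add: Bochner_Integration.integral_sum)
  define S where "S = (\<Sum>i\<in>I. \<Sum>j\<in>I. integral\<^sup>L M (\<lambda>x. (Q i j x)\<^sup>2))"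
  have S0: "0 \<le> S" unfolding S_def by (intro sum_nonneg integral_nonneg_AE) auto
  have step3: "integral\<^sup>L M (\<lambda>x. \<Sum>i\<in>I. \<Sum>j\<in>I. h i x * h j x * Q i j x) \<le> (t + S / t) / 2"
    if t: "t > 0" for t
  proof -
    have pw: "(\<Sum>i\<in>I. \<Sum>j\<in>I. h i x * h j x * Q i j x) \<le>
       (\<Sum>i\<in>I. \<Sum>j\<in>I. (t * (h i x * h j x)\<^sup>2 + (Q i j x)\<^sup>2 / t) / 2)" for x
      by (intro sum_mono amgm_aux t)
    have id: "(\<Sum>i\<in>I. \<Sum>j\<in>I. (t * (h i x * h j x)\<^sup>2 + (Q i j x)\<^sup>2 / t) / 2)
        = (t + (\<Sum>i\<in>I. \<Sum>j\<in>I. (Q i j x)\<^sup>2) / t) / 2" if x: "x \<in> space M" for x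
    proof -
      have "(\<Sum>i\<in>I. \<Sum>j\<in>I. (h i x * h j x)\<^sup>2) = (\<Sum>i\<in>I. (h i x)\<^sup>2) * (\<Sum>j\<in>I. (h j x)\<^sup>2)"
        by (simp add: sum_product power_mult_distrib)
      also have "\<dots> = 1" using hn[OF x] by simp
      finally have e1: "(\<Sum>i\<in>I. \<Sum>j\<in>I. (h i x * h j x)\<^sup>2) = 1" .
      have "(\<Sum>i\<in>I. \<Sum>j\<in>I. (t * (h i x * h j x)\<^sup>2 + (Q i j x)\<^sup>2 / t) / 2)
          = (t * (\<Sum>i\<in>I. \<Sum>j\<in>I. (h i x * h j x)\<^sup>2) + (\<Sum>i\<in>I. \<Sum>j\<in>I. (Q i j x)\<^sup>2) / t) / 2"
        by (simp only: sum_divide_distrib[symmetric] sum.distrib sum_distrib_left add_divide_distrib)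
      then show ?thesis using e1 by simp
    qed
    have "integral\<^sup>L M (\<lambda>x. \<Sum>i\<in>I. \<Sum>j\<in>I. h i x * h j x * Q i j x)
        \<le> integral\<^sup>L M (\<lambda>x. (t + (\<Sum>i\<in>I. \<Sum>j\<in>I. (Q i j x)\<^sup>2) / t) / 2)"
    proof (rule integral_mono)
      show "integrable M (\<lambda>x. \<Sum>i\<in>I. \<Sum>j\<in>I. h i x * h j x * Q i j x)" using hhQ by auto
      show "integrable M (\<lambda>x. (t + (\<Sum>i\<in>I. \<Sum>j\<in>I. (Q i j x)\<^sup>2) / t) / 2)" using Q2I by auto
      fix x assume x: "x \<in> space M"
      show "(\<Sum>i\<in>I. \<Sum>j\<in>I. h i x * h j x * Q i j x) \<le> (t + (\<Sum>i\<in>I. \<Sum>j\<in>I. (Q i j x)\<^sup>2) / t) / 2"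
        using order_trans[OF pw[of x] eq_refl[OF id[OF x]]] .
    qed
    also have "\<dots> = (t + S / t) / 2"
      using Q2I by (simp add: S_def Bochner_Integration.integral_sum prob_space)
    finally show ?thesis .
  qed
  have QX: "integrable M (\<lambda>x. Q i j x * X i j x)" if "i \<in> I" "j \<in> I" for i j
  proof (rule Bochner_Integration.integrable_bound[OF Bochner_Integration.integrable_add[OF Q2I[OF that] X2I[OF that]]])
    show "(\<lambda>x. Q i j x * X i j x) \<in> borel_measurable M" using that by measurable
    show "AE x in M. norm (Q i j x * X i j x) \<le> norm ((Q i j x)\<^sup>2 + (X i j x)\<^sup>2)"
    proof (rule AE_I2)
      fix x
      have "2 * \<bar>Q i j x\<bar> * \<bar>X i j x\<bar> \<le> (Q i j x)\<^sup>2 + (X i j x)\<^sup>2"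
        using sum_squares_bound[of "\<bar>Q i j x\<bar>" "\<bar>X i j x\<bar>"] by simp
      moreover have "0 \<le> \<bar>Q i j x\<bar> * \<bar>X i j x\<bar>" by simp
      ultimately show "norm (Q i j x * X i j x) \<le> norm ((Q i j x)\<^sup>2 + (X i j x)\<^sup>2)"
        by (simp add: abs_mult, linarith)
    qed
  qed
  have QQ: "integral\<^sup>L M (\<lambda>x. Q i j x * X i j x) = integral\<^sup>L M (\<lambda>x. (Q i j x)\<^sup>2)"
    if "i \<in> I" "j \<in> I" for i j
    using real_cond_exp_intg(2)[OF QX[OF that] QF XM[OF that]]
    by (simp add: Q_def[symmetric] power2_eq_square)
  have DI: "integrable M (\<lambda>x. (X i j x - Q i j x)\<^sup>2)" if "i \<in> I" "j \<in> I" for i j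
  proof -
    have "integrable M (\<lambda>x. (X i j x)\<^sup>2 - 2 * (Q i j x * X i j x) + (Q i j x)\<^sup>2)"
      using X2I[OF that] QX[OF that] Q2I[OF that] by auto
    moreover have "(\<lambda>x. (X i j x)\<^sup>2 - 2 * (Q i j x * X i j x) + (Q i j x)\<^sup>2) = (\<lambda>x. (X i j x - Q i j x)\<^sup>2)"
      by (simp add: power2_eq_square algebra_simps)
    ultimately show ?thesis by simp
  qed
  have DD: "integral\<^sup>L M (\<lambda>x. (X i j x - Q i j x)\<^sup>2) = integral\<^sup>L M (\<lambda>x. (X i j x)\<^sup>2) - integral\<^sup>L M (\<lambda>x. (Q i j x)\<^sup>2)"
    if "i \<in> I" "j \<in> I" for i j
  proof -
    have "(\<lambda>x. (X i j x - Q i j x)\<^sup>2) = (\<lambda>x. (X i j x)\<^sup>2 - 2 * (Q i j x * X i j x) + (Q i j x)\<^sup>2)"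
      by (simp add: power2_eq_square algebra_simps)
    then have "integral\<^sup>L M (\<lambda>x. (X i j x - Q i j x)\<^sup>2) =
       integral\<^sup>L M (\<lambda>x. (X i j x)\<^sup>2) - 2 * integral\<^sup>L M (\<lambda>x. Q i j x * X i j x) + integral\<^sup>L M (\<lambda>x. (Q i j x)\<^sup>2)"
      using X2I[OF that] QX[OF that] Q2I[OF that] by simp
    then show ?thesis using QQ[OF that] by simp
  qed
  define E where "E = integral\<^sup>L M (real_cond_exp M F (\<lambda>x. \<Sum>i\<in>I. \<Sum>j\<in>I. (X i j x - Q i j x)\<^sup>2))"
  have "E = integral\<^sup>L M (\<lambda>x. \<Sum>i\<in>I. \<Sum>j\<in>I. (X i j x - Q i j x)\<^sup>2)"
    unfolding E_def by (rule real_cond_exp_int(2)) (use DI in auto)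
  also have "\<dots> = (\<Sum>i\<in>I. \<Sum>j\<in>I. integral\<^sup>L M (\<lambda>x. (X i j x - Q i j x)\<^sup>2))"
    using DI by (simp add: Bochner_Integration.integral_sum)
  also have "\<dots> = (\<Sum>i\<in>I. \<Sum>j\<in>I. integral\<^sup>L M (\<lambda>x. (X i j x)\<^sup>2)) - S"
    unfolding S_def using DD by (simp add: sum_subtractf)
  finally have ES: "(\<Sum>i\<in>I. \<Sum>j\<in>I. integral\<^sup>L M (\<lambda>x. (X i j x)\<^sup>2)) - E = S" by simp
  define t where "t = sqrt S + \<epsilon>"
  have t0: "t > 0" unfolding t_def using eps S0 by (simp add: add_nonneg_pos)
  have "S / t \<le> sqrt S"
  proof -
    have "S = sqrt S * sqrt S" using S0 by simp
    also have "\<dots> \<le> sqrt S * t" unfolding t_def using eps S0 by (intro mult_left_mono) auto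
    finally show ?thesis using t0 by (simp add: divide_le_eq)
  qed
  then have "(t + S / t) / 2 \<le> sqrt S + \<epsilon>" unfolding t_def using eps by simp
  then have main: "integral\<^sup>L M (real_cond_exp M F g) \<le> sqrt S + \<epsilon>"
    using step1 step2 step3[OF t0] by simp
  show "integral\<^sup>L M (real_cond_exp M F (\<lambda>x. \<Sum>i\<in>I. \<Sum>j\<in>I. h i x * h j x * X i j x))
     \<le> sqrt ((\<Sum>i\<in>I. \<Sum>j\<in>I. integral\<^sup>L M (\<lambda>x. (X i j x)\<^sup>2))
            - integral\<^sup>L M (real_cond_exp M F (\<lambda>x. \<Sum>i\<in>I. \<Sum>j\<in>I. (X i j x - real_cond_exp M F (X i j) x)\<^sup>2))) + \<epsilon>"
    using main ES unfolding g_def E_def Q_def by simp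
  show "0 \<le> (\<Sum>i\<in>I. \<Sum>j\<in>I. integral\<^sup>L M (\<lambda>x. (X i j x)\<^sup>2))
            - integral\<^sup>L M (real_cond_exp M F (\<lambda>x. \<Sum>i\<in>I. \<Sum>j\<in>I. (X i j x - real_cond_exp M F (X i j) x)\<^sup>2))"
    using S0 ES unfolding E_def Q_def by simp
qed

lemma gauss_prob: "0 < s \<Longrightarrow> prob_space (gauss s)"
  unfolding gauss_def by (rule prob_space_normal_density)

lemma gauss_mom:
  assumes s: "0 < s"
  shows "integrable (gauss s) (\<lambda>y. y ^ (2 * k))"
    "integral\<^sup>L (gauss s) (\<lambda>y. y ^ (2 * k)) = fact (2 * k) / ((2 / s\<^sup>2) ^ k * fact k)"
proof -
  have hb: "has_bochner_integral lborel (\<lambda>x. normal_density 0 s x * x ^ (2 * k)) (fact (2 * k) / ((2 / s\<^sup>2) ^ k * fact k))"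
    using normal_moment_even[OF s, of 0 k] by simp
  have nn: "AE x in lborel. 0 \<le> normal_density 0 s x" by (simp add: normal_density_nonneg)
  show "integrable (gauss s) (\<lambda>y. y ^ (2 * k))"
    unfolding gauss_def using hb
    by (subst integrable_density[OF _ _ nn]) (auto simp: has_bochner_integral_iff)
  show "integral\<^sup>L (gauss s) (\<lambda>y. y ^ (2 * k)) = fact (2 * k) / ((2 / s\<^sup>2) ^ k * fact k)"
    unfolding gauss_def using hb
    by (subst integral_density[OF _ _ nn]) (auto simp: has_bochner_integral_iff)
qed

lemma gauss_mom2: "0 < s \<Longrightarrow> integrable (gauss s) (\<lambda>y. y\<^sup>2) \<and> integral\<^sup>L (gauss s) (\<lambda>y. y\<^sup>2) = s\<^sup>2"
  using gauss_mom[of s 1] by simp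

lemma gauss_mom4: "0 < s \<Longrightarrow> integrable (gauss s) (\<lambda>y. y ^ 4) \<and> integral\<^sup>L (gauss s) (\<lambda>y. y ^ 4) = 3 * s ^ 4"
  using gauss_mom[of s 2] by (simp add: fact_numeral field_simps eval_nat_numeral)

definition Pu :: "nat \<Rightarrow> (nat \<Rightarrow> real) measure" where
  "Pu d = PiM {..<d} (\<lambda>_. gauss (sqrt (1 / real d)))"

definition Rw :: "nat \<Rightarrow> ((nat \<Rightarrow> real) \<times> (nat \<times> nat \<Rightarrow> real)) measure" where
  "Rw d = (PiM {..<d} (\<lambda>_. gauss (sqrt (1 / real d)))) \<Otimes>\<^sub>M
      (PiM (upper_idx d) (\<lambda>p. gauss (if fst p = snd p then sqrt (2 / real d) else sqrt (1 / real d))))"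

lemma spk_eq: "spk_space d = Pu d \<Otimes>\<^sub>M Rw d"
  unfolding spk_space_def Pu_def Rw_def ..

lemma Pu_prob: "0 < d \<Longrightarrow> prob_space (Pu d)"
  unfolding Pu_def by (intro prob_space_PiM gauss_prob) simp

lemma Rw_prob: "0 < d \<Longrightarrow> prob_space (Rw d)"
  unfolding Rw_def by (intro prob_space_pair prob_space_PiM gauss_prob) auto

lemma spk_prob: "0 < d \<Longrightarrow> prob_space (spk_space d)"
  unfolding spk_eq by (intro prob_space_pair Pu_prob Rw_prob)

lemma marginal:
  fixes f :: "(nat \<Rightarrow> real) \<Rightarrow> real"
  assumes d: "0 < d" and f[measurable]: "f \<in> borel_measurable (Pu d)"
  shows "integrable (spk_space d) (\<lambda>\<omega>. f (uvec \<omega>)) = integrable (Pu d) f"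
    "integral\<^sup>L (spk_space d) (\<lambda>\<omega>. f (uvec \<omega>)) = integral\<^sup>L (Pu d) f"
proof -
  interpret R: prob_space "Rw d" by (rule Rw_prob[OF d])
  have e: "distr (Pu d \<Otimes>\<^sub>M Rw d) (Pu d) fst = Pu d" by (rule R.distr_pair_fst)
  have fm: "fst \<in> measurable (Pu d \<Otimes>\<^sub>M Rw d) (Pu d)" by simp
  show "integrable (spk_space d) (\<lambda>\<omega>. f (uvec \<omega>)) = integrable (Pu d) f"
    unfolding spk_eq uvec_def using integrable_distr_eq[OF fm f] e by simp
  show "integral\<^sup>L (spk_space d) (\<lambda>\<omega>. f (uvec \<omega>)) = integral\<^sup>L (Pu d) f"
    unfolding spk_eq uvec_def using integral_distr[OF fm f] e by simp
qed

lemma Pu_prod: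
  fixes f :: "nat \<Rightarrow> real \<Rightarrow> real"
  assumes d: "0 < d" and fi: "\<And>k. k < d \<Longrightarrow> integrable (gauss (sqrt (1 / real d))) (f k)"
  shows "integrable (Pu d) (\<lambda>x. \<Prod>k<d. f k (x k))"
    "integral\<^sup>L (Pu d) (\<lambda>x. \<Prod>k<d. f k (x k)) = (\<Prod>k<d. integral\<^sup>L (gauss (sqrt (1 / real d))) (f k))"
proof -
  interpret product_prob_space "\<lambda>_::nat. gauss (sqrt (1 / real d))"
    by (simp add: product_prob_space_def product_prob_space_axioms_def product_sigma_finite_def
        gauss_prob d prob_space_imp_sigma_finite)
  show "integrable (Pu d) (\<lambda>x. \<Prod>k<d. f k (x k))"
    unfolding Pu_def by (rule product_integrable_prod) (auto intro: fi)
  show "integral\<^sup>L (Pu d) (\<lambda>x. \<Prod>k<d. f k (x k)) = (\<Prod>k<d. integral\<^sup>L (gauss (sqrt (1 / real d))) (f k))"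
    unfolding Pu_def by (rule product_integral_prod) (auto intro: fi)
qed

lemma integral_if_const:
  "integral\<^sup>L M (\<lambda>y. if c then f y else g y) = (if c then integral\<^sup>L M f else integral\<^sup>L M g)"
  by (cases c) auto

lemma Pu_one:
  fixes g :: "real \<Rightarrow> real"
  assumes d: "0 < d" and i: "i < d" and gi: "integrable (gauss (sqrt (1 / real d))) g"
  shows "integrable (Pu d) (\<lambda>x. g (x i))"
    "integral\<^sup>L (Pu d) (\<lambda>x. g (x i)) = integral\<^sup>L (gauss (sqrt (1 / real d))) g"
proof -
  let ?G = "gauss (sqrt (1 / real d))"
  interpret G: prob_space ?G using gauss_prob d by simp
  define f where "f k = (\<lambda>y. if k = i then g y else 1)" for k
  have one: "integral\<^sup>L ?G (\<lambda>y. 1::real) = 1" by (simp add: G.prob_space)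
  have fi: "integrable ?G (f k)" for k unfolding f_def using gi by (cases "k = i") auto
  have e1: "(\<lambda>x. \<Prod>k<d. f k (x k)) = (\<lambda>x. g (x i))"
    unfolding f_def using i by (simp add: prod.delta)
  have e2: "(\<Prod>k<d. integral\<^sup>L ?G (f k)) = integral\<^sup>L ?G g"
    unfolding f_def integral_if_const one using i by (simp add: prod.delta)
  show "integrable (Pu d) (\<lambda>x. g (x i))" using Pu_prod(1)[of d f, OF d fi] e1 by simp
  show "integral\<^sup>L (Pu d) (\<lambda>x. g (x i)) = integral\<^sup>L ?G g" using Pu_prod(2)[of d f, OF d fi] e1 e2 by simp
qed

lemma Pu_two:
  fixes g1 g2 :: "real \<Rightarrow> real"
  assumes d: "0 < d" and i: "i < d" and j: "j < d" and ij: "i \<noteq> j"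
    and gi1: "integrable (gauss (sqrt (1 / real d))) g1"
    and gi2: "integrable (gauss (sqrt (1 / real d))) g2"
  shows "integrable (Pu d) (\<lambda>x. g1 (x i) * g2 (x j))"
    "integral\<^sup>L (Pu d) (\<lambda>x. g1 (x i) * g2 (x j)) = integral\<^sup>L (gauss (sqrt (1 / real d))) g1 * integral\<^sup>L (gauss (sqrt (1 / real d))) g2"
proof -
  let ?G = "gauss (sqrt (1 / real d))"
  interpret G: prob_space ?G using gauss_prob d by simp
  define f where "f k = (\<lambda>y. (if k = i then g1 y else 1) * (if k = j then g2 y else 1))" for k
  have one: "integral\<^sup>L ?G (\<lambda>y. 1::real) = 1" by (simp add: G.prob_space)
  have fi: "integrable ?G (f k)" for k unfolding f_def using gi1 gi2 ij
    by (cases "k = i"; cases "k = j") auto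
  have e1: "(\<lambda>x. \<Prod>k<d. f k (x k)) = (\<lambda>x. g1 (x i) * g2 (x j))"
    unfolding f_def using i j by (simp add: prod.distrib prod.delta)
  have fk: "integral\<^sup>L ?G (f k) = (if k = i then integral\<^sup>L ?G g1 else 1) * (if k = j then integral\<^sup>L ?G g2 else 1)" for k
    unfolding f_def using ij by (cases "k = i"; cases "k = j") (auto simp: one G.prob_space)
  have e2: "(\<Prod>k<d. integral\<^sup>L ?G (f k)) = integral\<^sup>L ?G g1 * integral\<^sup>L ?G g2"
    unfolding fk using i j by (simp add: prod.distrib prod.delta)
  show "integrable (Pu d) (\<lambda>x. g1 (x i) * g2 (x j))" using Pu_prod(1)[of d f, OF d fi] e1 by simp
  show "integral\<^sup>L (Pu d) (\<lambda>x. g1 (x i) * g2 (x j)) = integral\<^sup>L ?G g1 * integral\<^sup>L ?G g2"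
    using Pu_prod(2)[of d f, OF d fi] e1 e2 by simp
qed

lemma Pu_mom:
  assumes d: "0 < d" and i: "i < d" and j: "j < d"
  shows "integrable (Pu d) (\<lambda>x. (x i * x j)\<^sup>2)"
    "integral\<^sup>L (Pu d) (\<lambda>x. (x i * x j)\<^sup>2) = (if i = j then 3 / (real d)\<^sup>2 else 1 / (real d)\<^sup>2)"
    "integrable (Pu d) (\<lambda>x. (x i)\<^sup>2)"
    "integral\<^sup>L (Pu d) (\<lambda>x. (x i)\<^sup>2) = 1 / real d"
proof -
  let ?s = "sqrt (1 / real d)"
  have s: "0 < ?s" using d by simp
  have s2: "?s\<^sup>2 = 1 / real d" using d by simp
  have s4: "?s ^ 4 = 1 / (real d)\<^sup>2"
  proof -
    have "?s ^ 4 = ?s\<^sup>2 * ?s\<^sup>2" by (simp only: power_add[symmetric]) simp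
    then show ?thesis using s2 by (simp add: power2_eq_square)
  qed
  note m2 = gauss_mom2[OF s] and m4 = gauss_mom4[OF s]
  show "integrable (Pu d) (\<lambda>x. (x i)\<^sup>2)" using Pu_one(1)[OF d i, of "\<lambda>y. y\<^sup>2"] m2 by simp
  show "integral\<^sup>L (Pu d) (\<lambda>x. (x i)\<^sup>2) = 1 / real d" using Pu_one(2)[OF d i, of "\<lambda>y. y\<^sup>2"] m2 s2 by simp
  show "integrable (Pu d) (\<lambda>x. (x i * x j)\<^sup>2)"
  proof (cases "i = j")
    case True
    have "(\<lambda>x::nat\<Rightarrow>real. (x i * x j)\<^sup>2) = (\<lambda>x. (x i) ^ 4)" proof (intro ext)
      fix x :: "nat \<Rightarrow> real"
      have "(x i * x i)\<^sup>2 = x i ^ 4" by algebra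
      then show "(x i * x j)\<^sup>2 = x i ^ 4" using True by simp
    qed
    then show ?thesis using Pu_one(1)[OF d i, of "\<lambda>y. y ^ 4"] m4 by simp
  next
    case False
    have "(\<lambda>x::nat\<Rightarrow>real. (x i * x j)\<^sup>2) = (\<lambda>x. (x i)\<^sup>2 * (x j)\<^sup>2)" by (simp add: power_mult_distrib)
    then show ?thesis using Pu_two(1)[OF d i j False, of "\<lambda>y. y\<^sup>2" "\<lambda>y. y\<^sup>2"] m2 by simp
  qed
  show "integral\<^sup>L (Pu d) (\<lambda>x. (x i * x j)\<^sup>2) = (if i = j then 3 / (real d)\<^sup>2 else 1 / (real d)\<^sup>2)"
  proof (cases "i = j")
    case True
    have "(\<lambda>x::nat\<Rightarrow>real. (x i * x j)\<^sup>2) = (\<lambda>x. (x i) ^ 4)" proof (intro ext)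
      fix x :: "nat \<Rightarrow> real"
      have "(x i * x i)\<^sup>2 = x i ^ 4" by algebra
      then show "(x i * x j)\<^sup>2 = x i ^ 4" using True by simp
    qed
    then show ?thesis using Pu_one(2)[OF d i, of "\<lambda>y. y ^ 4"] m4 s4 True by simp
  next
    case False
    have "(\<lambda>x::nat\<Rightarrow>real. (x i * x j)\<^sup>2) = (\<lambda>x. (x i)\<^sup>2 * (x j)\<^sup>2)" by (simp add: power_mult_distrib)
    then show ?thesis using Pu_two(2)[OF d i j False, of "\<lambda>y. y\<^sup>2" "\<lambda>y. y\<^sup>2"] m2 s2 False
      by (simp add: power2_eq_square)
  qed
qed

lemma sets_gauss[measurable_cong]: "sets (gauss s) = sets borel"
  by (simp add: gauss_def)

lemma uvec_meas[measurable]: "i < d \<Longrightarrow> (\<lambda>\<omega>. uvec \<omega> i) \<in> borel_measurable (spk_space d)"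
  unfolding spk_space_def uvec_def by measurable

lemma zvec_meas[measurable]: "i < d \<Longrightarrow> (\<lambda>\<omega>. zvec \<omega> i) \<in> borel_measurable (spk_space d)"
  unfolding spk_space_def zvec_def by measurable

lemma W_meas[measurable]: "i < d \<Longrightarrow> j < d \<Longrightarrow> (\<lambda>\<omega>. Wmat \<omega> i j) \<in> borel_measurable (spk_space d)"
proof -
  assume i: "i < d" and j: "j < d"
  have a: "(i, j) \<in> upper_idx d" if "i \<le> j" using that j by (simp add: upper_idx_def)
  have b: "(j, i) \<in> upper_idx d" if "\<not> i \<le> j" using that i by (simp add: upper_idx_def)
  show ?thesis
  proof (cases "i \<le> j")
    case True
    then show ?thesis unfolding spk_space_def Wmat_def using a by simp measurable
  next
    case False
    then show ?thesis unfolding spk_space_def Wmat_def using b by simp measurable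
  qed
qed

lemma obs_meas: "obs d lam tau0 \<in> spk_space d \<rightarrow>\<^sub>M obs_space d"
  unfolding obs_def obs_space_def Mmat_def bvec_def
  by measurable

lemma sqrt_shift:
  fixes S \<delta> :: real assumes "0 \<le> S" "0 \<le> \<delta>"
  shows "sqrt S \<le> sqrt (S - \<delta>) + 2 * sqrt \<delta>"
proof (cases "\<delta> \<le> S")
  case True
  have "sqrt S = sqrt ((S - \<delta>) + \<delta>)" by simp
  also have "\<dots> \<le> sqrt (S - \<delta>) + sqrt \<delta>" using True assms by (intro sqrt_add_le_add_sqrt) auto
  moreover have "0 \<le> sqrt \<delta>" using assms by simp
  ultimately show ?thesis by linarith
next
  case False
  have "sqrt S \<le> sqrt \<delta>" using False by simp
  moreover have "sqrt (S - \<delta>) = - sqrt (\<delta> - S)" by (simp add: real_sqrt_minus[symmetric])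
  moreover have "sqrt (\<delta> - S) \<le> sqrt \<delta>" using assms by simp
  ultimately show ?thesis by linarith
qed

lemma double_sum_const:
  "(\<Sum>i<d. \<Sum>j<d. (if i = j then 3 / (real d)\<^sup>2 else 1 / (real d)\<^sup>2)) = (real d * real d + 2 * real d) / (real d)\<^sup>2"
proof -
  have "(\<Sum>i<d. \<Sum>j<d. (if i = j then 3 / (real d)\<^sup>2 else 1 / (real d)\<^sup>2))
      = (\<Sum>i<d. \<Sum>j<d. (1 / (real d)\<^sup>2 + (if i = j then 2 / (real d)\<^sup>2 else 0)))"
    by (intro sum.cong refl) auto
  also have "\<dots> = (\<Sum>i<d. real d / (real d)\<^sup>2 + 2 / (real d)\<^sup>2)"
    by (simp add: sum.distrib sum.delta)
  also have "\<dots> = (real d * real d + 2 * real d) / (real d)\<^sup>2"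
    by (simp add: add_divide_distrib distrib_left)
  finally show ?thesis .
qed

theorem lemma1:
  "\<exists>c1>0. \<exists>c2>0. \<forall>(lam::real) (tau0::real) (d::nat)
      (uhat :: (nat \<Rightarrow> nat \<Rightarrow> real) \<times> (nat \<Rightarrow> real) \<Rightarrow> nat \<Rightarrow> real).
     1 < lam \<and> lam \<le> 2 \<and> 0 < tau0 \<and> tau0 \<le> 2 \<and> 0 < d \<and>
     uhat \<in> obs_space d \<rightarrow>\<^sub>M PiM {..<d} (\<lambda>_. borel) \<and>
     (\<forall>x\<in>space (obs_space d). (\<Sum>i<d. (uhat x i)\<^sup>2) = 1)
     \<longrightarrow>
     integral\<^sup>L (spk_space d)
       (real_cond_exp (spk_space d) (obs_sigma d lam tau0)
          (\<lambda>\<omega>. (\<Sum>i<d. uhat (obs d lam tau0 \<omega>) i * uvec \<omega> i)\<^sup>2))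
     \<le> sqrt ((integral\<^sup>L (spk_space d) (\<lambda>\<omega>. \<Sum>i<d. (uvec \<omega> i)\<^sup>2))\<^sup>2
              - integral\<^sup>L (spk_space d) (MMSE d lam tau0))
       + c1 * real d powr (- c2)"
proof (rule exI[of _ "4::real"], rule conjI, simp, rule exI[of _ "1/2::real"], rule conjI, simp, intro allI impI)
  fix lam tau0 :: real and d :: nat and uhat :: "(nat \<Rightarrow> nat \<Rightarrow> real) \<times> (nat \<Rightarrow> real) \<Rightarrow> nat \<Rightarrow> real"
  assume H: "1 < lam \<and> lam \<le> 2 \<and> 0 < tau0 \<and> tau0 \<le> 2 \<and> 0 < d \<and>
     uhat \<in> obs_space d \<rightarrow>\<^sub>M PiM {..<d} (\<lambda>_. borel) \<and>
     (\<forall>x\<in>space (obs_space d). (\<Sum>i<d. (uhat x i)\<^sup>2) = 1)"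
  then have d: "0 < d" and um: "uhat \<in> obs_space d \<rightarrow>\<^sub>M PiM {..<d} (\<lambda>_. borel)"
    and un: "\<And>x. x \<in> space (obs_space d) \<Longrightarrow> (\<Sum>i<d. (uhat x i)\<^sup>2) = 1" by auto
  let ?M = "spk_space d" and ?F = "obs_sigma d lam tau0"
  have ps: "prob_space ?M" by (rule spk_prob[OF d])
  interpret P: prob_space ?M by (rule ps)
  have obsm: "obs d lam tau0 \<in> ?M \<rightarrow>\<^sub>M obs_space d" by (rule obs_meas)
  have obsf: "obs d lam tau0 \<in> space ?M \<rightarrow> space (obs_space d)"
    using measurable_space[OF obsm] by auto
  have sub: "subalgebra ?M ?F"
    unfolding subalgebra_def obs_sigma_def
    using sets_image_in_sets[OF refl obsm] by simp
  have sf: "sigma_finite_subalgebra ?M ?F"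
    by (intro finite_measure_subalgebra_is_sigma_finite)
       (simp add: finite_measure_subalgebra_def finite_measure_subalgebra_axioms_def sub P.finite_measure_axioms)
  define h where "h i \<omega> = uhat (obs d lam tau0 \<omega>) i" for i \<omega>
  define X where "X i j \<omega> = uvec \<omega> i * uvec \<omega> j" for i j \<omega>
  have hF: "h i \<in> borel_measurable ?F" if "i \<in> {..<d}" for i
  proof -
    have c: "(\<lambda>x. uhat x i) \<in> borel_measurable (obs_space d)"
      using measurable_compose[OF um measurable_component_singleton[OF that]] by simp
    show ?thesis unfolding h_def obs_sigma_def
      by (rule measurable_compose[OF measurable_vimage_algebra1[OF obsf] c])
  qed
  have hn: "(\<Sum>i\<in>{..<d}. (h i x)\<^sup>2) = 1" if "x \<in> space ?M" for x
    unfolding h_def using un[OF funcset_mem[OF obsf that]] by simp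
  have Pm: "\<And>i j. i < d \<Longrightarrow> j < d \<Longrightarrow> (\<lambda>x. (x i * x j)\<^sup>2) \<in> borel_measurable (Pu d)"
    unfolding Pu_def by measurable
  have Pm1: "\<And>i. i < d \<Longrightarrow> (\<lambda>x. (x i)\<^sup>2) \<in> borel_measurable (Pu d)"
    unfolding Pu_def by measurable
  have X2I: "integrable ?M (\<lambda>x. (X i j x)\<^sup>2)" if "i \<in> {..<d}" "j \<in> {..<d}" for i j
    using marginal(1)[OF d Pm[of i j]] Pu_mom(1)[OF d, of i j] that unfolding X_def by simp
  have X2v: "integral\<^sup>L ?M (\<lambda>x. (X i j x)\<^sup>2) = (if i = j then 3 / (real d)\<^sup>2 else 1 / (real d)\<^sup>2)"
    if "i \<in> {..<d}" "j \<in> {..<d}" for i j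
    using marginal(2)[OF d Pm[of i j]] Pu_mom(2)[OF d, of i j] that unfolding X_def by simp
  have U2I: "integrable ?M (\<lambda>x. (uvec x i)\<^sup>2)" if "i < d" for i
    using marginal(1)[OF d Pm1[of i]] Pu_mom(3)[OF d, of i i] that by simp
  have U2v: "integral\<^sup>L ?M (\<lambda>x. (uvec x i)\<^sup>2) = 1 / real d" if "i < d" for i
    using marginal(2)[OF d Pm1[of i]] Pu_mom(4)[OF d, of i i] that by simp
  have XI: "integrable ?M (X i j)" if "i \<in> {..<d}" "j \<in> {..<d}" for i j
  proof (rule Bochner_Integration.integrable_bound[OF Bochner_Integration.integrable_add[OF U2I[of i] U2I[of j]]])
    have "\<And>i j. i < d \<Longrightarrow> j < d \<Longrightarrow> X i j \<in> borel_measurable ?M" unfolding X_def by measurable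
    then show "X i j \<in> borel_measurable ?M" using that by simp
    show "AE x in ?M. norm (X i j x) \<le> norm ((uvec x i)\<^sup>2 + (uvec x j)\<^sup>2)"
    proof (rule AE_I2)
      fix x
      have "2 * \<bar>uvec x i\<bar> * \<bar>uvec x j\<bar> \<le> (uvec x i)\<^sup>2 + (uvec x j)\<^sup>2"
        using sum_squares_bound[of "\<bar>uvec x i\<bar>" "\<bar>uvec x j\<bar>"] by simp
      moreover have "0 \<le> \<bar>uvec x i\<bar> * \<bar>uvec x j\<bar>" by simp
      ultimately show "norm (X i j x) \<le> norm ((uvec x i)\<^sup>2 + (uvec x j)\<^sup>2)"
        unfolding X_def by (simp add: abs_mult, linarith)
    qed
  qed (use that in auto)
  define r where "r = real d powr (- (1/2))"
  have r0: "0 < r" unfolding r_def using d by simp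
  have fin0: "finite {..<d::nat}" by simp
  note AB = abstract_bound[where M="?M" and F="?F" and I="{..<d}" and h=h and X=X and \<epsilon>=r,
     OF sf ps fin0 hF hn XI X2I r0]
  have D: "(\<Sum>i\<in>{..<d}. \<Sum>j\<in>{..<d}. integral\<^sup>L ?M (\<lambda>x. (X i j x)\<^sup>2)) = 1 + 2 / real d"
  proof -
    have "(\<Sum>i\<in>{..<d}. \<Sum>j\<in>{..<d}. integral\<^sup>L ?M (\<lambda>x. (X i j x)\<^sup>2))
        = (\<Sum>i<d. \<Sum>j<d. (if i = j then 3 / (real d)\<^sup>2 else 1 / (real d)\<^sup>2))"
      using X2v by (intro sum.cong refl) auto
    also have "\<dots> = (real d * real d + 2 * real d) / (real d)\<^sup>2" by (rule double_sum_const)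
    also have "\<dots> = 1 + 2 / real d" using d by (simp add: field_simps power2_eq_square)
    finally show ?thesis .
  qed
  have A: "integral\<^sup>L ?M (\<lambda>\<omega>. \<Sum>i<d. (uvec \<omega> i)\<^sup>2) = 1"
  proof -
    have "integral\<^sup>L ?M (\<lambda>\<omega>. \<Sum>i<d. (uvec \<omega> i)\<^sup>2) = (\<Sum>i<d. integral\<^sup>L ?M (\<lambda>\<omega>. (uvec \<omega> i)\<^sup>2))"
      using U2I by (intro Bochner_Integration.integral_sum) auto
    also have "\<dots> = (\<Sum>i<d. 1 / real d)" using U2v by simp
    also have "\<dots> = 1" using d by simp
    finally show ?thesis .
  qed
  have feq: "(\<lambda>\<omega>. (\<Sum>i<d. uhat (obs d lam tau0 \<omega>) i * uvec \<omega> i)\<^sup>2)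
     = (\<lambda>x. \<Sum>i\<in>{..<d}. \<Sum>j\<in>{..<d}. h i x * h j x * X i j x)"
    unfolding h_def X_def by (simp add: power2_eq_square sum_product mult_ac)
  have meq: "MMSE d lam tau0 = real_cond_exp ?M ?F (\<lambda>x. \<Sum>i\<in>{..<d}. \<Sum>j\<in>{..<d}. (X i j x - real_cond_exp ?M ?F (X i j) x)\<^sup>2)"
    unfolding MMSE_def X_def by simp
  define L where "L = integral\<^sup>L ?M (real_cond_exp ?M ?F (\<lambda>x. \<Sum>i\<in>{..<d}. \<Sum>j\<in>{..<d}. h i x * h j x * X i j x))"
  define E where "E = integral\<^sup>L ?M (MMSE d lam tau0)"
  have eE: "integral\<^sup>L ?M (real_cond_exp ?M ?F (\<lambda>x. \<Sum>i\<in>{..<d}. \<Sum>j\<in>{..<d}. (X i j x - real_cond_exp ?M ?F (X i j) x)\<^sup>2)) = E"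
    unfolding E_def meq ..
  have L1: "L \<le> sqrt (1 + 2 / real d - E) + r"
    using AB(1) unfolding D eE L_def .
  have S0: "0 \<le> 1 + 2 / real d - E"
    using AB(2) unfolding D eE .
  have sh: "sqrt (1 + 2 / real d - E) \<le> sqrt (1 - E) + 2 * sqrt (2 / real d)"
  proof -
    have e3: "1 + 2 / real d - E - 2 / real d = 1 - E" by simp
    have "0 \<le> 2 / real d" by simp
    from sqrt_shift[OF S0 this] show ?thesis unfolding e3 .
  qed
  have "sqrt (2 / real d) \<le> 3 / 2 * r"
  proof -
    have e2: "2 / real d = 2 * (1 / real d)" by simp
    have "sqrt (2 / real d) = sqrt 2 * sqrt (1 / real d)" unfolding e2 by (rule real_sqrt_mult)
    also have "sqrt (1 / real d) = r"
    proof -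
      have "r = inverse (real d powr (1/2))" unfolding r_def by (rule powr_minus)
      also have "real d powr (1/2) = sqrt (real d)" by (rule powr_half_sqrt) simp
      finally have "r = inverse (sqrt (real d))" .
      moreover have "sqrt (1 / real d) = 1 / sqrt (real d)" by (rule real_sqrt_divide[of 1, simplified])
      ultimately show ?thesis by (simp add: divide_inverse)
    qed
    also have "sqrt 2 \<le> 3 / 2"
    proof -
      have "sqrt 2 \<le> sqrt ((3/2)\<^sup>2)" by (intro real_sqrt_le_mono) (simp add: power2_eq_square)
      then show ?thesis by simp
    qed
    then have "sqrt 2 * r \<le> 3 / 2 * r" using r0 by (intro mult_right_mono) auto
    finally show ?thesis .
  qed
  then have fin: "L \<le> sqrt (1 - E) + 4 * r" using L1 sh by linarith
  show "integral\<^sup>L (spk_space d)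
       (real_cond_exp (spk_space d) (obs_sigma d lam tau0)
          (\<lambda>\<omega>. (\<Sum>i<d. uhat (obs d lam tau0 \<omega>) i * uvec \<omega> i)\<^sup>2))
     \<le> sqrt ((integral\<^sup>L (spk_space d) (\<lambda>\<omega>. \<Sum>i<d. (uvec \<omega> i)\<^sup>2))\<^sup>2
              - integral\<^sup>L (spk_space d) (MMSE d lam tau0))
       + 4 * real d powr (- (1/2))"
  proof -
    have eL: "integral\<^sup>L (spk_space d)
       (real_cond_exp (spk_space d) (obs_sigma d lam tau0)
          (\<lambda>\<omega>. (\<Sum>i<d. uhat (obs d lam tau0 \<omega>) i * uvec \<omega> i)\<^sup>2)) = L"
      unfolding L_def feq ..
    have eR: "sqrt ((integral\<^sup>L (spk_space d) (\<lambda>\<omega>. \<Sum>i<d. (uvec \<omega> i)\<^sup>2))\<^sup>2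
              - integral\<^sup>L (spk_space d) (MMSE d lam tau0))
       + 4 * real d powr (- (1/2)) = sqrt (1 - E) + 4 * r"
      unfolding A E_def r_def by simp
    show ?thesis unfolding eL eR by (rule fin)
  qed
qed

end
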